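(* Let $p\ge2$ and consider the weighted acyclic directed graph described in the context, with sources $A_k$ and sinks $B_k$. For every $m\in\{0,\ldots,p-1\}$ and $n\in\mathbb N$, there is a unique configuration of pairwise vertex-disjoint (non-intersecting) directed paths connecting the sources $A_m,A_{m+1},\ldots,A_{m+n}$ to the sinks $B_0,B_1,\ldots,B_n$: for each $i\in\{0,\ldots,n\}$, the source $A_{m+i}$ is connected to the sink $B_i$ by the highest possible path, which passes through $(-m,m+ip)$. The weight of this configuration is $\prod_{i=0}^n\prod_{j=1}^{ip+m}V_j$.
   Context: Let $p\ge2$ and let $(V_l)_{l\ge1}$ be formal variables. Consider the directed graph whose vertices are the $(k,l)\in\mathbb Z\times\mathbb N$ with $k+l\equiv0 \pmod p$, whose edges are the rises $(k,l)\to(k+1,l+p-1)$, of weight $1$, and the falls $(k,l)\to(k+1,l-1)$ (for $l\ge1$), of weight $V_l$; the weight of a path is the product of its edge weights and the weight of a configuration of paths is the product of the path weights. For $k\in\mathbb N$ let $q_k=\lfloor k/(p-1)\rfloor$ and $r_k=k-(p-1)q_k$, and set $A_k:=(-k-q_k,r_k)=(-pq_k-r_k,r_k)$ and $B_k:=(kp,0)$. *)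

theory Defs
  imports Main
begin

type_synonym vertex = "int \<times> nat"

definition is_vertex :: "nat \<Rightarrow> vertex \<Rightarrow> bool" where
  "is_vertex p v \<longleftrightarrow> (fst v + int (snd v)) mod int p = 0"

definition is_rise :: "nat \<Rightarrow> vertex \<Rightarrow> vertex \<Rightarrow> bool" where
  "is_rise p u v \<longleftrightarrow> fst v = fst u + 1 \<and> snd v = snd u + (p - 1)"

definition is_fall :: "nat \<Rightarrow> vertex \<Rightarrow> vertex \<Rightarrow> bool" where
  "is_fall p u v \<longleftrightarrow> fst v = fst u + 1 \<and> snd u \<ge> 1 \<and> snd v = snd u - 1"

definition is_edge :: "nat \<Rightarrow> vertex \<Rightarrow> vertex \<Rightarrow> bool" where
  "is_edge p u v \<longleftrightarrow> is_vertex p u \<and> is_vertex p v \<and> (is_rise p u v \<or> is_fall p u v)"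

definition edge_weight :: "nat \<Rightarrow> (nat \<Rightarrow> 'a::comm_semiring_1) \<Rightarrow> vertex \<Rightarrow> vertex \<Rightarrow> 'a" where
  "edge_weight p V u v = (if is_rise p u v then 1 else V (snd u))"

definition is_path :: "nat \<Rightarrow> vertex list \<Rightarrow> bool" where
  "is_path p xs \<longleftrightarrow> xs \<noteq> [] \<and> (\<forall>v\<in>set xs. is_vertex p v) \<and>
     (\<forall>i. Suc i < length xs \<longrightarrow> is_edge p (xs ! i) (xs ! Suc i))"

definition path_weight :: "nat \<Rightarrow> (nat \<Rightarrow> 'a::comm_semiring_1) \<Rightarrow> vertex list \<Rightarrow> 'a" where
  "path_weight p V xs = prod_list (map (\<lambda>(u, v). edge_weight p V u v) (zip xs (tl xs)))"

definition config_weight :: "nat \<Rightarrow> (nat \<Rightarrow> 'a::comm_semiring_1) \<Rightarrow> vertex list list \<Rightarrow> 'a" where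
  "config_weight p V Ps = prod_list (map (path_weight p V) Ps)"

definition src :: "nat \<Rightarrow> nat \<Rightarrow> vertex" where
  "src p k = (- int (k + k div (p - 1)), k mod (p - 1))"

definition snk :: "nat \<Rightarrow> nat \<Rightarrow> vertex" where
  "snk p k = (int (k * p), 0)"

text \<open>Configurations of pairwise vertex-disjoint paths: path i starts at A_(m+i),
  and the set of end points is exactly {B_0,...,B_n} (any matching of sources to sinks).\<close>
definition nonint_config :: "nat \<Rightarrow> nat \<Rightarrow> nat \<Rightarrow> vertex list list \<Rightarrow> bool" where
  "nonint_config p m n Ps \<longleftrightarrow> length Ps = n + 1 \<and>
     (\<forall>i\<le>n. is_path p (Ps ! i) \<and> hd (Ps ! i) = src p (m + i)) \<and>
     last ` set Ps = snk p ` {0..n} \<and>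
     (\<forall>i j. i < j \<and> j \<le> n \<longrightarrow> set (Ps ! i) \<inter> set (Ps ! j) = {})"

definition path_above :: "vertex list \<Rightarrow> vertex list \<Rightarrow> bool" where
  "path_above xs ys \<longleftrightarrow> (\<forall>(k, l)\<in>set ys. \<exists>l'. (k, l') \<in> set xs \<and> l \<le> l')"

end

theory Submission
  imports Defs
begin

lemma path_step:
  assumes "is_path p xs" "Suc i < length xs"
  shows "fst (xs!Suc i) = fst (xs!i) + 1 \<and>
    (int (snd (xs!Suc i)) = int (snd (xs!i)) + int (p-1) \<or>
     (snd (xs!i) \<ge> 1 \<and> int (snd (xs!Suc i)) = int (snd (xs!i)) - 1))"
  using assms unfolding is_path_def is_edge_def is_rise_def is_fall_def by auto

lemma path_col:
  assumes "is_path p xs" "t < length xs"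
  shows "fst (xs!t) = fst (xs!0) + int t"
  using assms(2)
proof (induction t)
  case 0 then show ?case by simp
next
  case (Suc t)
  then show ?case using path_step[OF assms(1) Suc.prems] by auto
qed

lemma path_hgt:
  assumes "is_path p xs" "t + d < length xs"
  shows "int (snd (xs!(t+d))) \<le> int (snd (xs!t)) + int (p-1) * int d \<and>
         int (snd (xs!t)) \<le> int (snd (xs!(t+d))) + int d"
  using assms(2)
proof (induction d)
  case 0 then show ?case by simp
next
  case (Suc d)
  have "Suc (t+d) < length xs" using Suc.prems by simp
  from path_step[OF assms(1) this] Suc.IH Suc.prems show ?case
    by (auto simp: algebra_simps)
qed

lemma prod_list_map_upt0: "prod_list (map f [0..<n]) = (\<Prod>i<n. f i)"
  by (induction n) (auto simp: mult.commute)

lemma zip_tl: "zip xs (tl xs) = map (\<lambda>i. (xs!i, xs!Suc i)) [0..<length xs - 1]"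
  by (rule nth_equalityI) (auto simp: nth_tl)

lemma path_weight_nth:
  "path_weight p V xs = (\<Prod>i<length xs - 1. edge_weight p V (xs!i) (xs!Suc i))"
  unfolding path_weight_def zip_tl by (simp add: prod_list_map_upt0 comp_def)

lemma pigeon:
  fixes f :: "nat \<Rightarrow> nat"
  assumes "inj_on f {0..n}" "f ` {0..n} \<subseteq> {0..n}"
  shows "sum f {0..n} = sum id {0..n}"
proof -
  have "f ` {0..n} = {0..n}" using endo_inj_surj[OF _ assms(2,1)] by simp
  then have "sum id (f ` {0..n}) = sum id {0..n}" by simp
  then show ?thesis using sum.reindex[OF assms(1), of id] by simp
qed

lemma pigeon_le:
  fixes f :: "nat \<Rightarrow> nat"
  assumes "inj_on f {0..n}" "f ` {0..n} \<subseteq> {0..n}" "\<And>j. j \<le> n \<Longrightarrow> f j \<le> j"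
  shows "\<And>j. j \<le> n \<Longrightarrow> f j = j"
proof (rule ccontr)
  fix j assume j: "j \<le> n" "f j \<noteq> j"
  have "sum f {0..n} < sum id {0..n}"
    by (rule sum_strict_mono_ex1) (use assms(3) j in \<open>auto intro!: bexI[of _ j] simp: le_neq_implies_less\<close>)
  then show False using pigeon[OF assms(1,2)] by simp
qed

lemma pigeon_ge:
  fixes f :: "nat \<Rightarrow> nat"
  assumes "inj_on f {0..n}" "f ` {0..n} \<subseteq> {0..n}" "\<And>j. j \<le> n \<Longrightarrow> f j \<ge> j"
  shows "\<And>j. j \<le> n \<Longrightarrow> f j = j"
proof (rule ccontr)
  fix j assume j: "j \<le> n" "f j \<noteq> j"
  have "sum id {0..n} < sum f {0..n}"
    by (rule sum_strict_mono_ex1) (use assms(3) j in \<open>auto intro!: bexI[of _ j] simp: le_neq_implies_less\<close>)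
  then show False using pigeon[OF assms(1,2)] by simp
qed


definition t0 :: "nat \<Rightarrow> nat \<Rightarrow> nat \<Rightarrow> nat" where
  "t0 p m j = j + (m + j) div (p - 1)"
definition c0 :: "nat \<Rightarrow> nat \<Rightarrow> nat \<Rightarrow> int" where
  "c0 p m j = - int (m + j + (m + j) div (p - 1))"
definition Hc :: "nat \<Rightarrow> nat \<Rightarrow> nat \<Rightarrow> nat \<Rightarrow> nat" where
  "Hc p m j s = (if s \<le> t0 p m j then (m + j) mod (p - 1) + (p - 1) * s else m + j * p + t0 p m j - s)"
definition canon :: "nat \<Rightarrow> nat \<Rightarrow> nat \<Rightarrow> vertex list" where
  "canon p m j = map (\<lambda>s. (c0 p m j + int s, Hc p m j s)) [0..<t0 p m j + j * p + m + 1]"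

lemma key1: "p \<ge> 2 \<Longrightarrow> (m + j) mod (p - 1) + (p - 1) * t0 p m j = m + j * p"
proof -
  assume p: "p \<ge> 2"
  have "(m + j) mod (p - 1) + (p - 1) * ((m + j) div (p - 1)) = m + j" by simp
  moreover have "(p - 1) * j + j = j * p" using p by (cases p) (auto simp: algebra_simps)
  ultimately show ?thesis unfolding t0_def by (simp add: algebra_simps)
qed

lemma key2: "c0 p m j + int (t0 p m j) = - int m"
  unfolding c0_def t0_def by simp

lemma Hc_ge: "p \<ge> 2 \<Longrightarrow> t0 p m j \<le> s \<Longrightarrow> Hc p m j s = m + j * p + t0 p m j - s"
  using key1[of p m j] by (auto simp: Hc_def)

lemma Hc_le: "s \<le> t0 p m j \<Longrightarrow> Hc p m j s = (m + j) mod (p - 1) + (p - 1) * s"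
  by (auto simp: Hc_def)

definition g :: "nat \<Rightarrow> nat \<Rightarrow> int \<Rightarrow> int" where
  "g p m c = (if c \<le> - int m then int m + int (p - 1) * (int m + c) else - c)"

lemma Hc_g:
  assumes "p \<ge> 2" "s < t0 p m j + j * p + m + 1"
  shows "int (Hc p m j s) = int (j * p) + g p m (c0 p m j + int s)"
proof (cases "s \<le> t0 p m j")
  case True
  define P where "P = int (p - 1)"
  define r where "r = int ((m + j) mod (p - 1))"
  have k: "r + P * int (t0 p m j) = int m + int (j * p)"
    using key1[OF assms(1), of m j] unfolding P_def r_def by (metis of_nat_add of_nat_mult)
  have c: "c0 p m j = - int m - int (t0 p m j)" using key2[of p m j] by simp
  have h: "int (Hc p m j s) = r + P * int s" unfolding Hc_le[OF True] P_def r_def by simp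
  have le: "c0 p m j + int s \<le> - int m" using True c by simp
  have "g p m (c0 p m j + int s) = int m + P * (int m + (c0 p m j + int s))"
    unfolding g_def P_def[symmetric] using le by simp
  also have "\<dots> = int m + P * (int s - int (t0 p m j))" unfolding c by simp
  also have "\<dots> = r + P * int s - int (j * p)" using k by (simp add: algebra_simps)
  finally show ?thesis using h by simp
next
  case False
  then show ?thesis using key2[of p m j] assms Hc_ge[OF assms(1), of m j s] unfolding g_def
    by auto
qed

lemma canon_len: "length (canon p m j) = t0 p m j + j * p + m + 1"
  by (simp add: canon_def)

lemma canon_nth: "s < t0 p m j + j * p + m + 1 \<Longrightarrow> canon p m j ! s = (c0 p m j + int s, Hc p m j s)"
  by (simp add: canon_def del: upt_Suc)


lemma c_g: "p \<ge> 2 \<Longrightarrow> c + g p m c = (if c \<le> - int m then int p * (int m + c) else 0)"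
proof -
  assume p: "p \<ge> 2"
  have "int (p - 1) = int p - 1" using p by simp
  then show ?thesis unfolding g_def by (simp add: algebra_simps)
qed

lemma canon_vertex:
  assumes "p \<ge> 2" "s < t0 p m j + j * p + m + 1"
  shows "is_vertex p (c0 p m j + int s, Hc p m j s)"
proof -
  have "c0 p m j + int s + int (Hc p m j s) = int (j * p) + (c0 p m j + int s + g p m (c0 p m j + int s))"
    using Hc_g[OF assms] by simp
  then show ?thesis unfolding is_vertex_def c_g[OF assms(1)] by auto
qed

lemma canon_path:
  assumes "p \<ge> 2"
  shows "is_path p (canon p m j)"
  unfolding is_path_def
proof (intro conjI ballI allI impI)
  show "canon p m j \<noteq> []" by (simp add: canon_def)
next
  fix v assume "v \<in> set (canon p m j)"
  then obtain s where "s < t0 p m j + j * p + m + 1" "v = canon p m j ! s"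
    by (auto simp: in_set_conv_nth canon_len)
  then show "is_vertex p v" using canon_vertex[OF assms] canon_nth by simp
next
  fix s assume s: "Suc s < length (canon p m j)"
  then have s': "Suc s < t0 p m j + j * p + m + 1" by (simp add: canon_len)
  have nth: "canon p m j ! s = (c0 p m j + int s, Hc p m j s)"
            "canon p m j ! Suc s = (c0 p m j + int (Suc s), Hc p m j (Suc s))"
    using s' canon_nth by auto
  have v: "is_vertex p (canon p m j ! s)" "is_vertex p (canon p m j ! Suc s)"
    using nth canon_vertex[OF assms, of s m j] canon_vertex[OF assms, of "Suc s" m j] s' by auto
  show "is_edge p (canon p m j ! s) (canon p m j ! Suc s)"
  proof (cases "Suc s \<le> t0 p m j")
    case True
    then have "is_rise p (canon p m j ! s) (canon p m j ! Suc s)"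
      unfolding is_rise_def nth using Hc_le[of s p m j] Hc_le[of "Suc s" p m j] by simp
    then show ?thesis using v by (simp add: is_edge_def)
  next
    case False
    then have "is_fall p (canon p m j ! s) (canon p m j ! Suc s)"
      unfolding is_fall_def nth using Hc_ge[OF assms, of m j s] Hc_ge[OF assms, of m j "Suc s"] s' by simp
    then show ?thesis using v by (simp add: is_edge_def)
  qed
qed

lemma canon_hd: "p \<ge> 2 \<Longrightarrow> hd (canon p m j) = src p (m + j)"
  by (simp add: canon_def hd_map src_def Hc_le c0_def del: upt_Suc)

lemma canon_last: "p \<ge> 2 \<Longrightarrow> last (canon p m j) = snk p j"
proof -
  assume p: "p \<ge> 2"
  have "last (canon p m j) = canon p m j ! (t0 p m j + j * p + m)"
    using last_conv_nth[of "canon p m j"] by (simp add: canon_len canon_def del: upt_Suc)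
  also have "\<dots> = snk p j" using canon_nth[of "t0 p m j + j * p + m" p m j] Hc_ge[OF p, of m j "t0 p m j + j * p + m"]
     key2[of p m j] by (simp add: snk_def)
  finally show ?thesis .
qed

lemma canon_disj:
  assumes "p \<ge> 2" "i \<noteq> j"
  shows "set (canon p m i) \<inter> set (canon p m j) = {}"
proof (rule ccontr)
  assume "set (canon p m i) \<inter> set (canon p m j) \<noteq> {}"
  then obtain v where v: "v \<in> set (canon p m i)" "v \<in> set (canon p m j)" by blast
  from v(1) obtain s where s: "s < t0 p m i + i * p + m + 1" "v = canon p m i ! s"
    by (auto simp: in_set_conv_nth canon_len)
  from v(2) obtain s' where s': "s' < t0 p m j + j * p + m + 1" "v = canon p m j ! s'"
    by (auto simp: in_set_conv_nth canon_len)
  have e: "c0 p m i + int s = c0 p m j + int s'" "Hc p m i s = Hc p m j s'"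
    using s s' canon_nth by auto
  have "int (i * p) = int (Hc p m i s) - g p m (c0 p m i + int s)"
    using Hc_g[OF assms(1) s(1)] by simp
  also have "\<dots> = int (Hc p m j s') - g p m (c0 p m j + int s')" using e by simp
  also have "\<dots> = int (j * p)" using Hc_g[OF assms(1) s'(1)] by simp
  finally have "int (i * p) = int (j * p)" .
  then have "i = j" using assms(1) by simp
  then show False using assms(2) by simp
qed

lemma prod_shift:
  "(\<Prod>i\<in>{t..<t+N}. (V::nat\<Rightarrow>'a::comm_semiring_1) (N + t - i)) = (\<Prod>k\<in>{1..N}. V k)"
  by (rule prod.reindex_bij_witness[where i = "\<lambda>b. N + t - b" and j = "\<lambda>a. N + t - a"]) auto

lemma canon_weight:
  assumes "p \<ge> 2"
  shows "path_weight p V (canon p m j) = (\<Prod>k=1..j * p + m. V k)"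
proof -
  define T where "T = t0 p m j"
  define N where "N = j * p + m"
  define f where "f = (\<lambda>i. edge_weight p V (canon p m j ! i) (canon p m j ! Suc i))"
  have "path_weight p V (canon p m j) = (\<Prod>i<T + N. f i)"
    unfolding path_weight_nth f_def by (simp add: canon_len T_def N_def add.assoc)
  also have "{..<T + N} = {..<T} \<union> {T..<T+N}" by auto
  also have "prod f ({..<T} \<union> {T..<T+N}) = prod f {..<T} * prod f {T..<T+N}"
    by (rule prod.union_disjoint) auto
  also have "prod f {..<T} = 1"
  proof (rule prod.neutral, intro ballI)
    fix i assume "i \<in> {..<T}"
    then have "is_rise p (canon p m j ! i) (canon p m j ! Suc i)"
      unfolding is_rise_def using canon_nth[of i p m j] canon_nth[of "Suc i" p m j]
        Hc_le[of i p m j] Hc_le[of "Suc i" p m j] by (auto simp: T_def)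
    then show "f i = 1" by (simp add: f_def edge_weight_def)
  qed
  also have "prod f {T..<T+N} = (\<Prod>i\<in>{T..<T+N}. V (N + T - i))"
  proof (rule prod.cong[OF refl])
    fix i assume i: "i \<in> {T..<T+N}"
    have n: "canon p m j ! i = (c0 p m j + int i, N + T - i)"
      "canon p m j ! Suc i = (c0 p m j + int (Suc i), N + T - Suc i)"
      using i canon_nth[of i p m j] canon_nth[of "Suc i" p m j] Hc_ge[OF assms, of m j i]
        Hc_ge[OF assms, of m j "Suc i"] by (auto simp: T_def N_def algebra_simps)
    have "\<not> is_rise p (canon p m j ! i) (canon p m j ! Suc i)"
      unfolding is_rise_def n using i assms by auto
    then show "f i = V (N + T - i)" by (simp add: f_def edge_weight_def n)
  qed
  also have "\<dots> = (\<Prod>k=1..N. V k)" by (rule prod_shift)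
  finally show ?thesis by (simp add: N_def)
qed


lemma pathA:
  assumes p: "p \<ge> 2" and m: "m \<le> p - 1" and P: "is_path p xs"
    and h: "hd xs = src p (m + j)" and l: "last xs = snk p s"
  shows "length xs = t0 p m j + s * p + m + 1"
    and "xs ! 0 = (c0 p m j, (m + j) mod (p - 1))"
    and "fst (xs ! t0 p m j) = - int m"
    and "\<exists>\<tau>. snd (xs ! t0 p m j) = m + \<tau> * p \<and> \<tau> \<le> j \<and> \<tau> \<le> s"
proof -
  define N where "N = length xs"
  have ne: "xs \<noteq> []" using P by (simp add: is_path_def)
  then have N: "N > 0" by (simp add: N_def)
  show x0: "xs ! 0 = (c0 p m j, (m + j) mod (p - 1))"
    using h hd_conv_nth[OF ne] by (simp add: src_def c0_def)
  have xl: "xs ! (N - 1) = (int (s * p), 0)" using l last_conv_nth[OF ne] by (simp add: snk_def N_def)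
  have "fst (xs ! (N - 1)) = fst (xs ! 0) + int (N - 1)" using path_col[OF P, of "N - 1"] N N_def by simp
  then have "int (s * p) = c0 p m j + int (N - 1)" using xl x0 by simp
  then have Ne: "int (N - 1) = int (s * p) + int m + int (t0 p m j)" using key2[of p m j] by simp
  then have Ne': "N - 1 = t0 p m j + s * p + m" by linarith
  then show "length xs = t0 p m j + s * p + m + 1" using N unfolding N_def by linarith
  define T where "T = t0 p m j"
  have TN: "T < length xs" using Ne' N unfolding N_def T_def by linarith
  show c: "fst (xs ! t0 p m j) = - int m"
    using path_col[OF P TN] x0 key2[of p m j] T_def by simp
  define hh where "hh = snd (xs ! T)"
  have b1: "int hh \<le> int ((m + j) mod (p - 1)) + int (p - 1) * int T"
    using path_hgt[OF P, of 0 T] TN x0 hh_def by simp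
  also have "\<dots> = int (m + j * p)" using key1[OF p, of m j] T_def by (metis of_nat_add of_nat_mult)
  finally have b1: "hh \<le> m + j * p" by (simp only: of_nat_le_iff)
  have "T + (s * p + m) < length xs" using Ne' N unfolding N_def T_def by linarith
  from path_hgt[OF P this] have "int hh \<le> int (snd (xs ! (T + (s * p + m)))) + int (s * p + m)"
    using hh_def by simp
  also have "T + (s * p + m) = N - 1" using Ne' unfolding T_def by linarith
  finally have "int hh \<le> int (s * p + m)" using xl by simp
  then have b2: "hh \<le> s * p + m" by (simp only: of_nat_le_iff)
  have "is_vertex p (xs ! T)" using P TN by (auto simp: is_path_def)
  then have "(int hh - int m) mod int p = 0" using c T_def hh_def by (simp add: is_vertex_def)
  then have "int hh mod int p = int m mod int p" by (simp add: mod_eq_dvd_iff dvd_eq_mod_eq_0)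
  then have "hh mod p = m mod p" by (metis of_nat_eq_iff zmod_int)
  then have "hh mod p = m" using m p by simp
  then have hh: "hh = m + (hh div p) * p" by (metis mod_div_mult_eq add.commute)
  have "(hh div p) * p \<le> j * p" using b1 hh by linarith
  then have "hh div p \<le> j" using p by simp
  moreover have "(hh div p) * p \<le> s * p" using b2 hh by linarith
  then have "hh div p \<le> s" using p by simp
  ultimately show "\<exists>\<tau>. snd (xs ! t0 p m j) = m + \<tau> * p \<and> \<tau> \<le> j \<and> \<tau> \<le> s"
    using hh hh_def T_def by blast
qed

lemma pathB:
  assumes p: "p \<ge> 2" and m: "m \<le> p - 1" and P: "is_path p xs"
    and h: "hd xs = src p (m + j)" and l: "last xs = snk p j"
    and mid: "snd (xs ! t0 p m j) = m + j * p"
  shows "xs = canon p m j"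
proof (rule nth_equalityI)
  note A = pathA[OF p m P h l]
  show len: "length xs = length (canon p m j)" using A(1) by (simp add: canon_len)
  fix i assume i: "i < length xs"
  define T where "T = t0 p m j"
  define r where "r = (m + j) mod (p - 1)"
  have iN: "i < T + j * p + m + 1" using i A(1) T_def by simp
  have col: "fst (xs ! i) = c0 p m j + int i" using path_col[OF P i] A(2) by simp
  have k1: "int r + int (p - 1) * int T = int (m + j * p)"
    using key1[OF p, of m j] T_def r_def by (metis of_nat_add of_nat_mult)
  have "snd (xs ! i) = Hc p m j i"
  proof (cases "i \<le> T")
    case True
    have u: "int (snd (xs ! i)) \<le> int r + int (p - 1) * int i"
      using path_hgt[OF P, of 0 i] i A(2) r_def by simp
    have "i + (T - i) < length xs" using True iN A(1) T_def by simp
    from path_hgt[OF P this] have "int (snd (xs ! T)) \<le> int (snd (xs ! i)) + int (p - 1) * int (T - i)"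
      using True by simp
    then have "int (m + j * p) \<le> int (snd (xs ! i)) + int (p - 1) * (int T - int i)"
      using mid T_def True by (simp add: of_nat_diff)
    then have "int r + int (p - 1) * int i \<le> int (snd (xs ! i))" using k1 by (simp add: algebra_simps)
    then have "int (snd (xs ! i)) = int r + int (p - 1) * int i" using u by simp
    then have "int (snd (xs ! i)) = int (r + (p - 1) * i)" by (simp only: of_nat_add of_nat_mult)
    then have "snd (xs ! i) = r + (p - 1) * i" by (simp only: of_nat_eq_iff)
    then show ?thesis using True Hc_le[of i p m j] T_def r_def by simp
  next
    case False
    define E where "E = T + j * p + m"
    have E: "E < length xs" "xs ! E = (int (j * p), 0)" using A(1) T_def E_def
      using l last_conv_nth[of xs] P by (auto simp: snk_def is_path_def)
    have "i + (E - i) < length xs" using iN E_def E by simp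
    from path_hgt[OF P this] have u: "int (snd (xs ! i)) \<le> int (E - i)"
      using iN E_def E(2) by simp
    have "T + (i - T) < length xs" using False i by simp
    from path_hgt[OF P this] have "int (snd (xs ! T)) \<le> int (snd (xs ! i)) + int (i - T)"
      using False by simp
    moreover have "snd (xs ! T) = m + j * p" using mid T_def by simp
    moreover have "int (E - i) = int E - int i" "int (i - T) = int i - int T"
      using False iN E_def by auto
    moreover have "int E = int T + int (j * p) + int m" using E_def by simp
    ultimately have "int (snd (xs ! i)) = int (E - i)" using u by linarith
    then show ?thesis using Hc_ge[OF p, of m j i] False T_def E_def by simp
  qed
  then show "xs ! i = canon p m j ! i" using col canon_nth[OF iN[unfolded T_def]]
    by (simp add: prod_eq_iff)
qed

lemma canon_above:
  assumes p: "p \<ge> 2" and m: "m \<le> p - 1" and P: "is_path p Q"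
    and h: "hd Q = src p (m + i)" and l: "last Q = snk p i"
  shows "path_above (canon p m i) Q"
  unfolding path_above_def
proof (clarify)
  fix k l assume kl: "(k, l) \<in> set Q"
  note A = pathA[OF p m P h l]
  then obtain s where s: "s < length Q" "Q ! s = (k, l)" using kl by (auto simp: in_set_conv_nth)
  define T where "T = t0 p m i"
  define r where "r = (m + i) mod (p - 1)"
  define E where "E = T + i * p + m"
  have sN: "s < T + i * p + m + 1" using s A(1) T_def by simp
  have col: "k = c0 p m i + int s" using path_col[OF P s(1)] A(2) s(2) by simp
  have u1: "int l \<le> int r + int (p - 1) * int s"
    using path_hgt[OF P, of 0 s] s A(2) r_def by simp
  have E: "E < length Q" "Q ! E = (int (i * p), 0)" using A(1) T_def E_def
      using l last_conv_nth[of Q] P by (auto simp: snk_def is_path_def)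
  have "s + (E - s) < length Q" using sN E_def E by simp
  from path_hgt[OF P this] have u2: "int l \<le> int (E - s)"
    using sN E_def E(2) s(2) by simp
  have "l \<le> Hc p m i s"
  proof (cases "s \<le> T")
    case True
    have "int l \<le> int (r + (p - 1) * s)" using u1 by (simp only: of_nat_add of_nat_mult)
    then have "l \<le> r + (p - 1) * s" by (simp only: of_nat_le_iff)
    then show ?thesis using True Hc_le[of s p m i] T_def r_def by simp
  next
    case False then show ?thesis using u2 Hc_ge[OF p, of m i s] T_def E_def by simp
  qed
  moreover have "(k, Hc p m i s) \<in> set (canon p m i)"
    using canon_nth[OF sN[unfolded T_def]] sN col
    by (metis canon_len nth_mem T_def)
  ultimately show "\<exists>l'. (k, l') \<in> set (canon p m i) \<and> l \<le> l'" by blast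
qed


lemma config_canon:
  assumes p: "p \<ge> 2" and m: "m \<le> p - 1" and C: "nonint_config p m n Ps"
  shows "\<And>j. j \<le> n \<Longrightarrow> Ps ! j = canon p m j"
proof -
  have len: "length Ps = n + 1" and pa: "\<And>i. i \<le> n \<Longrightarrow> is_path p (Ps ! i)"
    and hd: "\<And>i. i \<le> n \<Longrightarrow> hd (Ps ! i) = src p (m + i)"
    and ls: "last ` set Ps = snk p ` {0..n}"
    and dj0: "\<And>i j. i < j \<Longrightarrow> j \<le> n \<Longrightarrow> set (Ps ! i) \<inter> set (Ps ! j) = {}"
    using C unfolding nonint_config_def by auto
  have dj: "\<And>i j. i \<le> n \<Longrightarrow> j \<le> n \<Longrightarrow> i \<noteq> j \<Longrightarrow> set (Ps ! i) \<inter> set (Ps ! j) = {}"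
    by (metis dj0 inf_commute linorder_neqE_nat)
  define \<sigma> where "\<sigma> i = (SOME s. s \<le> n \<and> last (Ps ! i) = snk p s)" for i
  have \<sigma>: "\<sigma> i \<le> n \<and> last (Ps ! i) = snk p (\<sigma> i)" if "i \<le> n" for i
  proof -
    have "Ps ! i \<in> set Ps" using that len by simp
    then have "last (Ps ! i) \<in> snk p ` {0..n}" using ls by blast
    then have "\<exists>s. s \<le> n \<and> last (Ps ! i) = snk p s" by auto
    then show ?thesis unfolding \<sigma>_def by (rule someI_ex)
  qed
  define \<tau> where "\<tau> i = (SOME t. snd (Ps ! i ! t0 p m i) = m + t * p \<and> t \<le> i \<and> t \<le> \<sigma> i)" for i
  have \<tau>: "snd (Ps ! i ! t0 p m i) = m + \<tau> i * p \<and> \<tau> i \<le> i \<and> \<tau> i \<le> \<sigma> i" if "i \<le> n" for i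
    unfolding \<tau>_def by (rule someI_ex, rule pathA(4)[OF p m pa[OF that] hd[OF that]]) (use \<sigma>[OF that] in simp)
  have vin: "(- int m, m + \<tau> i * p) \<in> set (Ps ! i)" if "i \<le> n" for i
  proof -
    note A = pathA[OF p m pa[OF that] hd[OF that] conjunct2[OF \<sigma>[OF that]]]
    have "t0 p m i < length (Ps ! i)" using A(1) by simp
    then have "Ps ! i ! t0 p m i \<in> set (Ps ! i)" by simp
    moreover have "Ps ! i ! t0 p m i = (- int m, m + \<tau> i * p)"
      using A(3) \<tau>[OF that] by (simp add: prod_eq_iff)
    ultimately show ?thesis by simp
  qed
  have inj\<tau>: "inj_on \<tau> {0..n}"
  proof (rule inj_onI, rule ccontr)
    fix i j assume ij: "i \<in> {0..n}" "j \<in> {0..n}" "\<tau> i = \<tau> j" "i \<noteq> j"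
    then show False using vin[of i] vin[of j] dj[of i j] by auto
  qed
  have \<tau>n: "\<And>i. i \<le> n \<Longrightarrow> \<tau> i \<le> n" using \<tau> le_trans by blast
  have \<tau>i: "\<And>i. i \<le> n \<Longrightarrow> \<tau> i = i"
    by (rule pigeon_le[OF inj\<tau>]) (use \<tau> \<tau>n in \<open>auto simp: image_subset_iff\<close>)
  have inj\<sigma>: "inj_on \<sigma> {0..n}"
  proof (rule inj_onI, rule ccontr)
    fix i j assume ij: "i \<in> {0..n}" "j \<in> {0..n}" "\<sigma> i = \<sigma> j" "i \<noteq> j"
    have "last (Ps ! i) \<in> set (Ps ! i)" "last (Ps ! j) \<in> set (Ps ! j)"
      using pa ij by (auto simp: is_path_def)
    then show False using \<sigma>[of i] \<sigma>[of j] dj[of i j] ij by auto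
  qed
  have \<sigma>i: "\<And>i. i \<le> n \<Longrightarrow> \<sigma> i = i"
    by (rule pigeon_ge[OF inj\<sigma>]) (use \<sigma> \<tau> \<tau>i in \<open>auto simp: image_subset_iff\<close>)
  fix j assume j: "j \<le> n"
  show "Ps ! j = canon p m j"
    by (rule pathB[OF p m pa[OF j] hd[OF j]]) (use \<sigma>[OF j] \<sigma>i[OF j] \<tau>[OF j] \<tau>i[OF j] in auto)
qed

theorem proposition2:
  fixes p m n :: nat and V :: "nat \<Rightarrow> 'a::comm_semiring_1"
  assumes "p \<ge> 2" and "m \<le> p - 1"
  shows "(\<exists>!Ps. nonint_config p m n Ps) \<and>
         (\<forall>Ps. nonint_config p m n Ps \<longrightarrow>
           (\<forall>i\<le>n. last (Ps ! i) = snk p i \<and>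
              (- int m, m + i * p) \<in> set (Ps ! i) \<and>
              (\<forall>Q. is_path p Q \<and> hd Q = src p (m + i) \<and> last Q = snk p i
                   \<longrightarrow> path_above (Ps ! i) Q)) \<and>
           config_weight p V Ps = (\<Prod>i=0..n. \<Prod>j=1..i * p + m. V j))"
proof -
  note p = assms(1) and m = assms(2)
  define Ps0 where "Ps0 = map (canon p m) [0..<n+1]"
  have eq: "Ps = Ps0" if "nonint_config p m n Ps" for Ps
  proof (rule nth_equalityI)
    show "length Ps = length Ps0" using that by (simp add: nonint_config_def Ps0_def)
    fix i assume "i < length Ps"
    then have "i \<le> n" using that by (simp add: nonint_config_def)
    then show "Ps ! i = Ps0 ! i" using config_canon[OF p m that]
      by (simp add: Ps0_def del: upt_Suc)
  qed
  have c0: "nonint_config p m n Ps0"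
    unfolding nonint_config_def
  proof (intro conjI allI impI)
    show "length Ps0 = n + 1" by (simp add: Ps0_def)
  next
    fix i assume "i \<le> n"
    then have "Ps0 ! i = canon p m i" by (simp add: Ps0_def del: upt_Suc)
    then show "is_path p (Ps0 ! i)" "hd (Ps0 ! i) = src p (m + i)"
      using canon_path[OF p] canon_hd[OF p] by auto
  next
    have "last ` set Ps0 = (\<lambda>i. last (canon p m i)) ` {0..n}"
      by (auto simp: Ps0_def image_image atLeastLessThanSuc_atLeastAtMost simp del: upt_Suc)
    then show "last ` set Ps0 = snk p ` {0..n}" using canon_last[OF p] by simp
  next
    fix i j assume "i < j \<and> j \<le> n"
    then show "set (Ps0 ! i) \<inter> set (Ps0 ! j) = {}"
      using canon_disj[OF p, of i j m] by (simp add: Ps0_def del: upt_Suc)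
  qed
  have "\<exists>!Ps. nonint_config p m n Ps" using c0 eq by blast
  moreover have "\<forall>i\<le>n. last (Ps0 ! i) = snk p i \<and>
              (- int m, m + i * p) \<in> set (Ps0 ! i) \<and>
              (\<forall>Q. is_path p Q \<and> hd Q = src p (m + i) \<and> last Q = snk p i
                   \<longrightarrow> path_above (Ps0 ! i) Q)"
  proof (rule allI, rule impI, intro conjI)
    fix i assume i: "i \<le> n"
    then have P: "Ps0 ! i = canon p m i" by (simp add: Ps0_def del: upt_Suc)
    show "last (Ps0 ! i) = snk p i" using P canon_last[OF p] by simp
    have "t0 p m i < t0 p m i + i * p + m + 1" by simp
    from canon_nth[OF this] have "canon p m i ! t0 p m i = (- int m, m + i * p)"
      using key2[of p m i] key1[OF p, of m i] Hc_le[of "t0 p m i" p m i] by simp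
    then show "(- int m, m + i * p) \<in> set (Ps0 ! i)" using P
      by (metis canon_len less_add_one nth_mem add_lessD1)
    show "\<forall>Q. is_path p Q \<and> hd Q = src p (m + i) \<and> last Q = snk p i
                   \<longrightarrow> path_above (Ps0 ! i) Q" using P canon_above[OF p m] by auto
  qed
  moreover have "config_weight p V Ps0 = (\<Prod>i=0..n. \<Prod>j=1..i * p + m. V j)"
    unfolding config_weight_def Ps0_def
    by (simp only: map_map comp_def prod_list_map_upt0 canon_weight[OF p] Suc_eq_plus1[symmetric] lessThan_Suc_atMost atLeast0AtMost)
  ultimately show ?thesis using eq by blast
qed

end
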